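(* Let $\mathcal{T}$ be a finite set, $\mathcal{S}=\mathcal{T}^D$, $x_1\in\mathcal{S}$. Suppose for each $i$ the conditional velocity $u^i_t(\cdot,\cdot|x_1^i)$ on $\mathcal{T}$ satisfies the Rate Conditions and generates a conditional probability path $p_t(x^i|x_1^i)$ with $p_0(\cdot|x_1^i)=p$ and $p_1(\cdot|x_1^i)=\delta_{x_1^i}$; set $p_t(x|x_1)=\prod_ip_t(x^i|x_1^i)$. Let $p^\theta_1$ be the law at time $1$ of the CTMC on $\mathcal{S}$ started from $\prod_i p(x^i)$ with single-variable-change velocity $u_t(x,z)=\sum_{i=1}^Du^i_t(x^i,z)\prod_{j\neq i}\delta_{z^j}(x^j)$, where each $u^i_t(\cdot,z)$ satisfies the Rate Conditions and $u^i_t(y,z)>0$ whenever $u^i_t(y,z^i|x_1^i)>0$ for $y\neq z^i$. Then $$\log p^\theta_1(x_1)\ge\int_0^1\mathbb{E}_{x_t\sim p_t(\cdot|x_1)}\sum_{i=1}^D\Big[u^i_t(x_t^i,x_t)-u^i_t(x_t^i,x_t^i|x_1^i)+\sum_{y^i\ne x_t^i}u^i_t(y^i,x_t^i|x_1^i)\log\frac{u^i_t(y^i,x_t)}{u^i_t(y^i,x_t^i|x_1^i)}\Big]dt.$$ *)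

theory Defs
  imports "HOL-Analysis.Analysis"
begin

definition rate_at :: "('a::finite \<Rightarrow> real) \<Rightarrow> 'a \<Rightarrow> bool" where
  "rate_at r x \<longleftrightarrow> (\<forall>y. y \<noteq> x \<longrightarrow> 0 \<le> r y) \<and> (\<Sum>y\<in>UNIV. r y) = 0"

text \<open>Rate Conditions for a time-dependent velocity u t y x (rate from x to y) on [0,1).\<close>
definition rate_conditions :: "(real \<Rightarrow> 'a::finite \<Rightarrow> 'a \<Rightarrow> real) \<Rightarrow> bool" where
  "rate_conditions u \<longleftrightarrow> (\<forall>t\<in>{0..<1}. \<forall>x. rate_at (\<lambda>y. u t y x) x)"

definition prob_path :: "(real \<Rightarrow> 'a::finite \<Rightarrow> real) \<Rightarrow> bool" where
  "prob_path p \<longleftrightarrow> (\<forall>t\<in>{0..1}. (\<forall>x. 0 \<le> p t x) \<and> (\<Sum>x\<in>UNIV. p t x) = 1)"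

text \<open>The velocity u (continuous in t on [0,1)) generates the probability path p:
  p is the marginal of the CTMC with rates u, i.e. p is continuous on [0,1] and
  solves the Kolmogorov forward equation on [0,1).\<close>
definition generates :: "(real \<Rightarrow> 'a::finite \<Rightarrow> 'a \<Rightarrow> real) \<Rightarrow> (real \<Rightarrow> 'a \<Rightarrow> real) \<Rightarrow> bool" where
  "generates u p \<longleftrightarrow>
     (\<forall>y x. continuous_on {0..<1} (\<lambda>t. u t y x)) \<and>
     prob_path p \<and>
     (\<forall>x. continuous_on {0..1} (\<lambda>t. p t x)) \<and>
     (\<forall>t\<in>{0..<1}. \<forall>x. ((\<lambda>s. p s x) has_real_derivative (\<Sum>z\<in>UNIV. u t x z * p t z))
                          (at t within {0..1}))"

definition factorized_velocity ::
  "('d::finite \<Rightarrow> real \<Rightarrow> 'a::finite \<Rightarrow> ('d \<Rightarrow> 'a) \<Rightarrow> real) \<Rightarrow> real \<Rightarrow> ('d \<Rightarrow> 'a) \<Rightarrow> ('d \<Rightarrow> 'a) \<Rightarrow> real" where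
  "factorized_velocity u t x z =
     (\<Sum>i\<in>UNIV. u i t (x i) z * (\<Prod>j\<in>UNIV - {i}. if x j = z j then 1 else 0))"

definition product_path :: "('d::finite \<Rightarrow> real \<Rightarrow> 'a \<Rightarrow> real) \<Rightarrow> real \<Rightarrow> ('d \<Rightarrow> 'a) \<Rightarrow> real" where
  "product_path pc t x = (\<Prod>i\<in>UNIV. pc i t (x i))"

end

theory Submission
  imports Defs
begin


fun iterp :: "(real \<Rightarrow> 's::finite \<Rightarrow> 's \<Rightarrow> real) \<Rightarrow> ('s \<Rightarrow> real) \<Rightarrow> real \<Rightarrow> nat \<Rightarrow> real \<Rightarrow> 's \<Rightarrow> real" where
  "iterp N c s 0 t z = c z"
| "iterp N c s (Suc n) t z = c z + integral {t..s} (\<lambda>\<tau>. \<Sum>x\<in>UNIV. N \<tau> z x * iterp N c s n \<tau> x)"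

lemma exp_integral:
  fixes t s L :: real
  assumes "t \<le> s"
  shows "integral {t..s} (\<lambda>\<tau>. L * exp (L * (s - \<tau>))) = exp (L * (s - t)) - 1"
proof -
  have "((\<lambda>\<tau>. L * exp (L * (s - \<tau>))) has_integral ((- exp (L*(s-s))) - (- exp (L*(s-t))))) {t..s}"
  proof (rule fundamental_theorem_of_calculus[of t s "\<lambda>\<tau>. - exp (L * (s - \<tau>))", OF assms])
    fix x assume "x \<in> {t..s}"
    have "((\<lambda>\<tau>. - exp (L * (s - \<tau>))) has_real_derivative L * exp (L * (s - x))) (at x within {t..s})"
      by (auto intro!: derivative_eq_intros)
    then show "((\<lambda>\<tau>. - exp (L * (s - \<tau>))) has_vector_derivative L * exp (L * (s - x))) (at x within {t..s})"
      by (simp add: has_real_derivative_iff_has_vector_derivative)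
  qed
  then show ?thesis by (metis (no_types, lifting) diff_minus_eq_add integral_unique minus_diff_eq mult_zero_right diff_self exp_zero uminus_add_conv_diff)
qed

lemma backward_ode:
  fixes N :: "real \<Rightarrow> 's::finite \<Rightarrow> 's \<Rightarrow> real"
  assumes s: "0 \<le> s"
    and Ncont: "\<And>z x. continuous_on {0..s} (\<lambda>t. N t z x)"
    and Nnn: "\<And>t z x. t \<in> {0..s} \<Longrightarrow> 0 \<le> N t z x"
    and Nrow: "\<And>t z. t \<in> {0..s} \<Longrightarrow> (\<Sum>x\<in>UNIV. N t z x) = L"
    and c0: "\<And>z. 0 \<le> c z" and c1: "\<And>z. c z \<le> 1"
  shows "\<exists>g. (\<forall>z. g s z = c z) \<and> (\<forall>t\<in>{0..s}. \<forall>z. 0 \<le> g t z) \<and>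
     (\<forall>t\<in>{0..s}. \<forall>z. ((\<lambda>t. g t z) has_real_derivative - (\<Sum>x\<in>UNIV. N t z x * g t x)) (at t within {0..s}))"
proof -
  define it where "it = iterp N c s"
  have it0: "it 0 t z = c z" for t z by (simp add: it_def)
  have itS: "it (Suc n) t z = c z + integral {t..s} (\<lambda>\<tau>. \<Sum>x\<in>UNIV. N \<tau> z x * it n \<tau> x)" for n t z
    by (simp add: it_def)
  have L0: "0 \<le> L" using Nrow[of s] Nnn[of s] s by (metis atLeastAtMost_iff order_refl sum_nonneg)
  have cont: "continuous_on {0..s} (\<lambda>t. it n t z)" for n z
  proof (induction n arbitrary: z)
    case 0 then show ?case by (simp add: it0)
  next
    case (Suc n)
    have "continuous_on {0..s} (\<lambda>\<tau>. \<Sum>x\<in>UNIV. N \<tau> z x * it n \<tau> x)"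
      by (intro continuous_on_sum continuous_on_mult Ncont Suc.IH)
    then have "continuous_on {0..s} (\<lambda>t. integral {t..s} (\<lambda>\<tau>. \<Sum>x\<in>UNIV. N \<tau> z x * it n \<tau> x))"
      by (intro indefinite_integral_continuous_1' integrable_continuous_real)
    then show ?case unfolding itS by (intro continuous_on_add continuous_on_const)
  qed
  have Fint: "(\<lambda>\<tau>. \<Sum>x\<in>UNIV. N \<tau> z x * it n \<tau> x) integrable_on {t..s}" if "0 \<le> t" for n z t
  proof -
    have "continuous_on {0..s} (\<lambda>\<tau>. \<Sum>x\<in>UNIV. N \<tau> z x * it n \<tau> x)"
      by (intro continuous_on_sum continuous_on_mult Ncont cont)
    then have "continuous_on {t..s} (\<lambda>\<tau>. \<Sum>x\<in>UNIV. N \<tau> z x * it n \<tau> x)"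
      by (rule continuous_on_subset) (use that in auto)
    then show ?thesis by (rule integrable_continuous_real)
  qed
  have bnd: "0 \<le> it n t z \<and> it n t z \<le> exp (L * (s - t))" if "t \<in> {0..s}" for n t z
    using that
  proof (induction n arbitrary: t z)
    case 0
    have "1 \<le> exp (L * (s - t))" using 0 L0 by simp
    then show ?case using c0[of z] c1[of z] unfolding it0 by linarith
  next
    case (Suc n)
    have IH1: "\<And>\<tau> x. \<tau> \<in> {0..s} \<Longrightarrow> 0 \<le> it n \<tau> x" using Suc.IH by blast
    have IH2: "\<And>\<tau> x. \<tau> \<in> {0..s} \<Longrightarrow> it n \<tau> x \<le> exp (L * (s - \<tau>))" using Suc.IH by blast
    have i1: "0 \<le> integral {t..s} (\<lambda>\<tau>. \<Sum>x\<in>UNIV. N \<tau> z x * it n \<tau> x)"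
      using Suc.prems by (intro integral_nonneg Fint) (auto intro!: sum_nonneg mult_nonneg_nonneg Nnn IH1)
    have "integral {t..s} (\<lambda>\<tau>. \<Sum>x\<in>UNIV. N \<tau> z x * it n \<tau> x) \<le> integral {t..s} (\<lambda>\<tau>. L * exp (L * (s - \<tau>)))"
    proof (rule integral_le)
      show "(\<lambda>\<tau>. \<Sum>x\<in>UNIV. N \<tau> z x * it n \<tau> x) integrable_on {t..s}" using Suc.prems by (intro Fint) auto
      show "(\<lambda>\<tau>. L * exp (L * (s - \<tau>))) integrable_on {t..s}"
        by (intro integrable_continuous_real continuous_intros)
      fix \<tau> assume "\<tau> \<in> {t..s}"
      then have tau: "\<tau> \<in> {0..s}" using Suc.prems by auto
      have "(\<Sum>x\<in>UNIV. N \<tau> z x * it n \<tau> x) \<le> (\<Sum>x\<in>UNIV. N \<tau> z x * exp (L * (s - \<tau>)))"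
        using tau by (intro sum_mono mult_left_mono Nnn IH2)
      also have "\<dots> = L * exp (L * (s - \<tau>))" using Nrow[OF tau, of z] by (simp add: sum_distrib_right[symmetric])
      finally show "(\<Sum>x\<in>UNIV. N \<tau> z x * it n \<tau> x) \<le> L * exp (L * (s - \<tau>))" .
    qed
    also have "\<dots> = exp (L * (s - t)) - 1" using Suc.prems by (intro exp_integral) auto
    finally show ?case using i1 c0[of z] c1[of z] unfolding itS by linarith
  qed
  have mono: "it n t z \<le> it (Suc n) t z" if "t \<in> {0..s}" for n t z
    using that
  proof (induction n arbitrary: t z)
    case 0
    have "0 \<le> integral {t..s} (\<lambda>\<tau>. \<Sum>x\<in>UNIV. N \<tau> z x * it 0 \<tau> x)"
      using 0 by (intro integral_nonneg Fint) (auto intro!: sum_nonneg mult_nonneg_nonneg Nnn c0 simp: it0)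
    then show ?case unfolding itS by (simp add: it0)
  next
    case (Suc n)
    have "integral {t..s} (\<lambda>\<tau>. \<Sum>x\<in>UNIV. N \<tau> z x * it n \<tau> x) \<le> integral {t..s} (\<lambda>\<tau>. \<Sum>x\<in>UNIV. N \<tau> z x * it (Suc n) \<tau> x)"
      using Suc.prems by (intro integral_le Fint) (auto intro!: sum_mono mult_left_mono Nnn Suc.IH)
    then show ?case by (subst (1 2) itS) simp
  qed
  define gl where "gl t z = (SUP n. it n t z)" for t z
  have conv: "(\<lambda>n. it n t z) \<longlonglongrightarrow> gl t z" if "t \<in> {0..s}" for t z
    unfolding gl_def
  proof (rule LIMSEQ_incseq_SUP)
    show "bdd_above (range (\<lambda>n. it n t z))"
      using bnd[OF that] by (intro bdd_aboveI[of _ "exp (L * (s - t))"]) auto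
    show "incseq (\<lambda>n. it n t z)" using mono[OF that] by (intro incseq_SucI) auto
  qed
  have glnn: "0 \<le> gl t z" if "t \<in> {0..s}" for t z
    by (rule LIMSEQ_le_const[OF conv[OF that]]) (use bnd[OF that] in blast)
  define Fl where "Fl z = (\<lambda>\<tau>. \<Sum>x\<in>UNIV. N \<tau> z x * gl \<tau> x)" for z
  have eqn: "Fl z integrable_on {t..s} \<and> gl t z = c z + integral {t..s} (Fl z)" if t: "t \<in> {0..s}" for t z
  proof -
    have mct: "Fl z integrable_on {t..s} \<and> ((\<lambda>k. integral {t..s} (\<lambda>\<tau>. \<Sum>x\<in>UNIV. N \<tau> z x * it k \<tau> x)) \<longlonglongrightarrow> integral {t..s} (Fl z))"
    proof (rule monotone_convergence_increasing)
      show "(\<lambda>\<tau>. \<Sum>x\<in>UNIV. N \<tau> z x * it k \<tau> x) integrable_on {t..s}" for k using t by (intro Fint) auto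
      show "(\<Sum>x\<in>UNIV. N \<tau> z x * it k \<tau> x) \<le> (\<Sum>x\<in>UNIV. N \<tau> z x * it (Suc k) \<tau> x)" if "\<tau> \<in> {t..s}" for k \<tau>
        using that t by (intro sum_mono mult_left_mono Nnn mono) auto
      show "(\<lambda>k. \<Sum>x\<in>UNIV. N \<tau> z x * it k \<tau> x) \<longlonglongrightarrow> Fl z \<tau>" if "\<tau> \<in> {t..s}" for \<tau>
        unfolding Fl_def using that t by (intro tendsto_sum tendsto_mult_left conv) auto
      show "bounded (range (\<lambda>k. integral {t..s} (\<lambda>\<tau>. \<Sum>x\<in>UNIV. N \<tau> z x * it k \<tau> x)))"
        unfolding bounded_real
      proof (intro exI[of _ "exp (L * (s - t))"] ballI)
        fix y assume "y \<in> range (\<lambda>k. integral {t..s} (\<lambda>\<tau>. \<Sum>x\<in>UNIV. N \<tau> z x * it k \<tau> x))"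
        then obtain k where k: "y = integral {t..s} (\<lambda>\<tau>. \<Sum>x\<in>UNIV. N \<tau> z x * it k \<tau> x)" by auto
        have "0 \<le> y"
          unfolding k using t bnd by (intro integral_nonneg Fint) (auto intro!: sum_nonneg mult_nonneg_nonneg Nnn)
        moreover have "y \<le> exp (L * (s - t))"
          using bnd[OF t, of "Suc k" z] c0[of z] unfolding k itS by linarith
        ultimately show "\<bar>y\<bar> \<le> exp (L * (s - t))" by simp
      qed
    qed
    then have "(\<lambda>k. it (Suc k) t z) \<longlonglongrightarrow> c z + integral {t..s} (Fl z)"
      unfolding itS by (intro tendsto_add tendsto_const) auto
    moreover have "(\<lambda>k. it (Suc k) t z) \<longlonglongrightarrow> gl t z"
      using conv[OF t] by (rule LIMSEQ_Suc)
    ultimately show ?thesis using mct LIMSEQ_unique by blast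
  qed
  have glcont: "continuous_on {0..s} (\<lambda>t. gl t z)" for z
  proof -
    have "continuous_on {0..s} (\<lambda>t. c z + integral {t..s} (Fl z))"
      using eqn[of 0 z] s by (intro continuous_on_add continuous_on_const indefinite_integral_continuous_1') auto
    then show ?thesis by (rule continuous_on_eq) (use eqn in auto)
  qed
  have Flcont: "continuous_on {0..s} (Fl z)" for z
    unfolding Fl_def by (intro continuous_on_sum continuous_on_mult Ncont glcont)
  have der: "((\<lambda>t. gl t z) has_real_derivative - Fl z t) (at t within {0..s})" if t: "t \<in> {0..s}" for t z
  proof (rule has_field_derivative_transform_within)
    show "((\<lambda>t. c z + integral {t..s} (Fl z)) has_real_derivative - Fl z t) (at t within {0..s})"
      using integral_has_real_derivative'[OF Flcont t, of z] by (auto intro!: derivative_eq_intros)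
    show "(0::real) < 1" by simp
    show "t \<in> {0..s}" by fact
    show "c z + integral {x..s} (Fl z) = gl x z" if "x \<in> {0..s}" "dist x t < 1" for x
      using eqn[OF that(1)] by simp
  qed
  show ?thesis
  proof (intro exI[of _ gl] conjI ballI allI)
    show "gl s z = c z" for z using eqn[of s z] s by simp
    show "0 \<le> gl t z" if "t \<in> {0..s}" for t z using glnn[OF that] .
    show "((\<lambda>t. gl t z) has_real_derivative - (\<Sum>x\<in>UNIV. N t z x * gl t x)) (at t within {0..s})"
      if "t \<in> {0..s}" for t z using der[OF that] by (simp add: Fl_def)
  qed
qed



definition kl :: "real \<Rightarrow> real \<Rightarrow> real" where "kl a b = a * ln (a / b) - a + b"

lemma kl_ineq:
  assumes "0 \<le> a" "0 \<le> b" "0 < a \<Longrightarrow> 0 < b" "0 < r"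
  shows "a * ln r - b * r + b \<le> kl a b"
proof (cases "a = 0")
  case True then show ?thesis using assms by (simp add: kl_def)
next
  case False
  then have a: "0 < a" using assms by simp
  then have b: "0 < b" using assms by simp
  have "ln (r * b / a) \<le> r * b / a - 1" using a b assms(4) by (intro ln_le_minus_one) simp
  moreover have "ln (r * b / a) = ln r + ln b - ln a" using a b assms(4) by (simp add: ln_div ln_mult)
  ultimately have "a * (ln r + ln b - ln a) \<le> a * (r * b / a - 1)" using a by (intro mult_left_mono) auto
  then have "a * ln r + a * ln b - a * ln a \<le> b * r - a" using a by (simp add: algebra_simps)
  moreover have "a * ln (a / b) = a * ln a - a * ln b" using a b by (simp add: ln_div algebra_simps)
  ultimately show ?thesis unfolding kl_def by linarith
qed

lemma kl_nonneg:
  assumes "0 \<le> a" "0 \<le> b" "0 < a \<Longrightarrow> 0 < b"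
  shows "0 \<le> kl a b"
  using kl_ineq[OF assms, of 1] by simp



locale core_setup =
  fixes A B :: "real \<Rightarrow> 's::finite \<Rightarrow> 's \<Rightarrow> real" and P q :: "real \<Rightarrow> 's \<Rightarrow> real"
    and I :: "real \<Rightarrow> real" and x1 :: 's
  assumes A_off: "\<And>t x z. t \<in> {0..<1} \<Longrightarrow> x \<noteq> z \<Longrightarrow> 0 \<le> A t x z"
    and A_col: "\<And>t z. t \<in> {0..<1} \<Longrightarrow> (\<Sum>x\<in>UNIV. A t x z) = 0"
    and B_off: "\<And>t x z. t \<in> {0..<1} \<Longrightarrow> x \<noteq> z \<Longrightarrow> 0 \<le> B t x z"
    and B_col: "\<And>t z. t \<in> {0..<1} \<Longrightarrow> (\<Sum>x\<in>UNIV. B t x z) = 0"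
    and AB: "\<And>t x z. t \<in> {0..<1} \<Longrightarrow> x \<noteq> z \<Longrightarrow> 0 < A t x z \<Longrightarrow> 0 < B t x z"
    and B_cont: "\<And>x z. continuous_on {0..<1} (\<lambda>t. B t x z)"
    and P_nn: "\<And>t x. t \<in> {0..1} \<Longrightarrow> 0 \<le> P t x"
    and P_sum: "\<And>t. t \<in> {0..1} \<Longrightarrow> (\<Sum>x\<in>UNIV. P t x) = 1"
    and q_nn: "\<And>t x. t \<in> {0..1} \<Longrightarrow> 0 \<le> q t x"
    and q_sum: "\<And>t. t \<in> {0..1} \<Longrightarrow> (\<Sum>x\<in>UNIV. q t x) = 1"
    and P_der: "\<And>t x. t \<in> {0..<1} \<Longrightarrow>
        ((\<lambda>s. P s x) has_real_derivative (\<Sum>z\<in>UNIV. A t x z * P t z)) (at t within {0..1})"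
    and q_der: "\<And>t x. t \<in> {0..<1} \<Longrightarrow>
        ((\<lambda>s. q s x) has_real_derivative (\<Sum>z\<in>UNIV. B t x z * q t z)) (at t within {0..1})"
    and P_cont: "continuous_on {0..1} (\<lambda>t. P t x1)"
    and q_cont: "continuous_on {0..1} (\<lambda>t. q t x1)"
    and P0: "P 0 = q 0" and P1: "P 1 x1 = 1"
    and I_eq: "\<And>t. t \<in> {0..<1} \<Longrightarrow> I t = - (\<Sum>z\<in>UNIV. P t z * (\<Sum>x\<in>UNIV-{z}. kl (A t x z) (B t x z)))"
    and Iint: "set_integrable lborel {0..1} I"
begin

lemma I_nonpos: "t \<in> {0..<1} \<Longrightarrow> I t \<le> 0"
  unfolding I_eq
  by (auto intro!: sum_nonneg mult_nonneg_nonneg P_nn kl_nonneg A_off B_off AB)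

lemma step:
  assumes s: "0 \<le> s" "s < 1" and e: "0 < e" "e < 1"
  shows "(1 - P s x1) * ln e + integral {0..s} I \<le> ln (q s x1 + e)"
proof -
  have sub: "{0..s} \<subseteq> {0..<1}" using s by auto
  have sub1: "{0..s} \<subseteq> {0..1}" using s by auto
  have "bounded ((\<lambda>t. \<Sum>z\<in>UNIV. \<bar>B t z z\<bar>) ` {0..s})"
    by (intro compact_imp_bounded compact_continuous_image continuous_intros
        continuous_on_subset[OF B_cont sub]) auto
  then obtain a where a: "\<And>t. t \<in> {0..s} \<Longrightarrow> \<bar>\<Sum>z\<in>UNIV. \<bar>B t z z\<bar>\<bar> \<le> a"
    unfolding bounded_real by blast
  have Bdiag: "- B t z z \<le> a" if "t \<in> {0..s}" for t z
  proof -
    have "\<bar>B t z z\<bar> \<le> (\<Sum>z\<in>UNIV. \<bar>B t z z\<bar>)"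
      by (rule member_le_sum) auto
    then show ?thesis using a[OF that] by linarith
  qed
  define N where "N t z x = B t x z + (if x = z then a else 0)" for t z x
  define c where "c z = (if z = x1 then 1 else (0::real))" for z
  obtain g where gs: "\<And>z. g s z = c z" and gnn: "\<And>t z. t \<in> {0..s} \<Longrightarrow> 0 \<le> g t z"
    and gder: "\<And>t z. t \<in> {0..s} \<Longrightarrow>
       ((\<lambda>t. g t z) has_real_derivative - (\<Sum>x\<in>UNIV. N t z x * g t x)) (at t within {0..s})"
  proof -
    have "\<exists>g. (\<forall>z. g s z = c z) \<and> (\<forall>t\<in>{0..s}. \<forall>z. 0 \<le> g t z) \<and>
     (\<forall>t\<in>{0..s}. \<forall>z. ((\<lambda>t. g t z) has_real_derivative - (\<Sum>x\<in>UNIV. N t z x * g t x)) (at t within {0..s}))"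
    proof (rule backward_ode[where L = a])
      show "0 \<le> s" by fact
      show "continuous_on {0..s} (\<lambda>t. N t z x)" for z x
        unfolding N_def by (intro continuous_intros continuous_on_subset[OF B_cont sub])
      show "0 \<le> N t z x" if "t \<in> {0..s}" for t z x
        using Bdiag[OF that, of z] B_off[of t x z] that s unfolding N_def by auto
      show "(\<Sum>x\<in>UNIV. N t z x) = a" if "t \<in> {0..s}" for t z
        using B_col[of t z] that s unfolding N_def by (simp add: sum.distrib)
      show "0 \<le> c z" "c z \<le> 1" for z unfolding c_def by auto
    qed
    then show ?thesis using that by blast
  qed
  define h where "h t z = exp (a * (t - s)) * g t z + e" for t z
  have hpos: "0 < h t z" if "t \<in> {0..s}" for t z
    unfolding h_def using gnn[OF that, of z] e by (simp add: add_nonneg_pos)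
  have hs: "h s z = c z + e" for z unfolding h_def gs by simp
  have hder: "((\<lambda>t. h t z) has_real_derivative - (\<Sum>x\<in>UNIV. B t x z * h t x)) (at t within {0..s})"
    if t: "t \<in> {0..s}" for t z
  proof -
    have D: "((\<lambda>t. h t z) has_real_derivative
       (a * exp (a * (t - s))) * g t z + exp (a * (t - s)) * (- (\<Sum>x\<in>UNIV. N t z x * g t x))) (at t within {0..s})"
      unfolding h_def by (rule derivative_eq_intros gder[OF t] refl | simp)+
    have "(\<Sum>x\<in>UNIV. N t z x * g t x) = (\<Sum>x\<in>UNIV. B t x z * g t x) + a * g t z"
    proof -
      have "(\<Sum>x\<in>UNIV. (if x = z then a else 0) * g t x) = (\<Sum>x\<in>UNIV. if x = z then a * g t z else 0)"
        by (intro sum.cong) auto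
      then show ?thesis unfolding N_def distrib_right sum.distrib by simp
    qed
    moreover have "(\<Sum>x\<in>UNIV. B t x z * h t x) = exp (a * (t - s)) * (\<Sum>x\<in>UNIV. B t x z * g t x)"
    proof -
      have "(\<Sum>x\<in>UNIV. B t x z * h t x) = exp (a * (t - s)) * (\<Sum>x\<in>UNIV. B t x z * g t x) + e * (\<Sum>x\<in>UNIV. B t x z)"
        unfolding h_def by (simp add: algebra_simps sum.distrib sum_distrib_left)
      then show ?thesis using B_col[of t z] t sub by auto
    qed
    ultimately show ?thesis using D by (auto elim!: DERIV_cong simp: algebra_simps)
  qed
  have hge: "e \<le> h t z" if "t \<in> {0..s}" for t z
    unfolding h_def using gnn[OF that, of z] by simp
  have Iint_on: "I integrable_on {0..1}" using set_borel_integral_eq_integral(1)[OF Iint] .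
  have IintS: "I integrable_on {0..s}" by (rule integrable_on_subinterval[OF Iint_on sub1])
  define W where "W t = (\<Sum>z\<in>UNIV. q t z * h t z)" for t
  have Wder: "(W has_real_derivative 0) (at t within {0..s})" if t: "t \<in> {0..s}" for t
  proof -
    have qd: "((\<lambda>s. q s z) has_real_derivative (\<Sum>w\<in>UNIV. B t z w * q t w)) (at t within {0..s})" for z
      by (rule has_field_derivative_subset[OF q_der sub1]) (use t sub in auto)
    have D: "(W has_real_derivative (\<Sum>z\<in>UNIV. (\<Sum>w\<in>UNIV. B t z w * q t w) * h t z + (- (\<Sum>x\<in>UNIV. B t x z * h t x)) * q t z)) (at t within {0..s})"
      unfolding W_def by (intro DERIV_sum DERIV_mult qd hder[OF t])
    have "(\<Sum>z\<in>UNIV. (\<Sum>w\<in>UNIV. B t z w * q t w) * h t z) = (\<Sum>z\<in>UNIV. (\<Sum>x\<in>UNIV. B t x z * h t x) * q t z)"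
      unfolding sum_distrib_right by (subst sum.swap) (simp add: mult_ac)
    then have "(\<Sum>z\<in>UNIV. (\<Sum>w\<in>UNIV. B t z w * q t w) * h t z + (- (\<Sum>x\<in>UNIV. B t x z * h t x)) * q t z) = 0"
      by (simp add: sum_subtractf)
    with D show ?thesis by simp
  qed
  have "((\<lambda>_. 0::real) has_integral W s - W 0) {0..s}"
    by (rule fundamental_theorem_of_calculus[OF s(1)])
       (use Wder in \<open>auto simp: has_real_derivative_iff_has_vector_derivative[symmetric]\<close>)
  then have Ws0: "W s = W 0" by (simp add: has_integral_0_eq)
  have Ws: "W s = q s x1 + e"
  proof -
    have "W s = (\<Sum>z\<in>UNIV. q s z * c z) + e * (\<Sum>z\<in>UNIV. q s z)"
      unfolding W_def hs by (simp add: algebra_simps sum.distrib sum_distrib_left)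
    moreover have "(\<Sum>z\<in>UNIV. q s z * c z) = q s x1"
      unfolding c_def by (simp add: if_distrib cong: if_cong)
    ultimately show ?thesis using q_sum[of s] s by simp
  qed
  define G where "G t = (\<Sum>z\<in>UNIV. P t z * ln (h t z))" for t
  have W0: "W 0 = (\<Sum>z\<in>UNIV. P 0 z * h 0 z)" unfolding W_def P0 ..
  have W0pos: "e \<le> W 0"
  proof -
    have "(\<Sum>z\<in>UNIV. P 0 z * e) \<le> (\<Sum>z\<in>UNIV. P 0 z * h 0 z)"
      using s by (intro sum_mono mult_left_mono hge P_nn) auto
    then show ?thesis using P_sum[of 0] unfolding W0 by (simp add: sum_distrib_right[symmetric])
  qed
  have G0: "G 0 \<le> ln (W 0)"
  proof -
    have Wp: "0 < W 0" using W0pos e by simp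
    have "G 0 - ln (W 0) = (\<Sum>z\<in>UNIV. P 0 z * (ln (h 0 z) - ln (W 0)))"
      unfolding G_def using P_sum[of 0] by (simp add: algebra_simps sum.distrib sum_subtractf sum_distrib_right[symmetric])
    also have "\<dots> \<le> (\<Sum>z\<in>UNIV. P 0 z * (h 0 z / W 0 - 1))"
    proof (intro sum_mono mult_left_mono)
      fix z
      have "ln (h 0 z) - ln (W 0) = ln (h 0 z / W 0)" using hpos[of 0 z] Wp s by (simp add: ln_div)
      also have "\<dots> \<le> h 0 z / W 0 - 1" using hpos[of 0 z] Wp s by (intro ln_le_minus_one) simp
      finally show "ln (h 0 z) - ln (W 0) \<le> h 0 z / W 0 - 1" .
      show "0 \<le> P 0 z" by (rule P_nn) simp
    qed
    also have "\<dots> = (\<Sum>z\<in>UNIV. P 0 z * h 0 z) / W 0 - 1"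
      using P_sum[of 0] by (simp add: algebra_simps sum_subtractf sum_divide_distrib)
    also have "\<dots> = 0" using Wp unfolding W0 by simp
    finally show ?thesis by simp
  qed
  define G' where "G' t = (\<Sum>z\<in>UNIV. (\<Sum>x\<in>UNIV. A t z x * P t x) * ln (h t z) + (- (\<Sum>x\<in>UNIV. B t x z * h t x)) / h t z * P t z)" for t
  have Gder: "(G has_real_derivative G' t) (at t within {0..s})" if t: "t \<in> {0..s}" for t
  proof -
    have Pd: "((\<lambda>s. P s z) has_real_derivative (\<Sum>w\<in>UNIV. A t z w * P t w)) (at t within {0..s})" for z
      by (rule has_field_derivative_subset[OF P_der sub1]) (use t sub in auto)
    have Ld: "((\<lambda>t. ln (h t z)) has_real_derivative (- (\<Sum>x\<in>UNIV. B t x z * h t x)) / h t z) (at t within {0..s})" for z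
      by (rule DERIV_cong[OF DERIV_ln_divide[THEN DERIV_chain2, OF hpos[OF t] hder[OF t]]]) simp
    show ?thesis unfolding G_def G'_def by (intro DERIV_sum DERIV_mult Pd Ld)
  qed
  have G'le: "G' t \<le> - I t" if t: "t \<in> {0..s}" for t
  proof -
    have t1: "t \<in> {0..<1}" using t sub by auto
    have e1: "(\<Sum>z\<in>UNIV. (\<Sum>x\<in>UNIV. A t z x * P t x) * ln (h t z)) = (\<Sum>z\<in>UNIV. P t z * (\<Sum>x\<in>UNIV. A t x z * ln (h t x)))"
      unfolding sum_distrib_right sum_distrib_left by (subst sum.swap) (simp add: mult_ac)
    have e2: "G' t = (\<Sum>z\<in>UNIV. P t z * ((\<Sum>x\<in>UNIV. A t x z * ln (h t x)) - (\<Sum>x\<in>UNIV. B t x z * h t x) / h t z))"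
      unfolding G'_def sum.distrib e1 by (simp add: algebra_simps sum.distrib sum_subtractf sum_negf)
    have br: "(\<Sum>x\<in>UNIV. A t x z * ln (h t x)) - (\<Sum>x\<in>UNIV. B t x z * h t x) / h t z
          \<le> (\<Sum>x\<in>UNIV-{z}. kl (A t x z) (B t x z))" for z
    proof -
      define T where "T x = A t x z * (ln (h t x) - ln (h t z)) - B t x z * (h t x / h t z) + B t x z" for x
      have "(\<Sum>x\<in>UNIV. T x) = (\<Sum>x\<in>UNIV. A t x z * ln (h t x)) - (\<Sum>x\<in>UNIV. A t x z) * ln (h t z)
              - (\<Sum>x\<in>UNIV. B t x z * h t x) / h t z + (\<Sum>x\<in>UNIV. B t x z)"
        unfolding T_def by (simp add: algebra_simps sum.distrib sum_subtractf sum_distrib_right sum_distrib_left sum_divide_distrib)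
      then have "(\<Sum>x\<in>UNIV. T x) = (\<Sum>x\<in>UNIV. A t x z * ln (h t x)) - (\<Sum>x\<in>UNIV. B t x z * h t x) / h t z"
        using A_col[OF t1, of z] B_col[OF t1, of z] by simp
      moreover have "(\<Sum>x\<in>UNIV. T x) = T z + (\<Sum>x\<in>UNIV-{z}. T x)"
        by (simp add: sum.remove)
      moreover have "T z = 0" unfolding T_def using hpos[OF t, of z] by simp
      moreover have "(\<Sum>x\<in>UNIV-{z}. T x) \<le> (\<Sum>x\<in>UNIV-{z}. kl (A t x z) (B t x z))"
      proof (rule sum_mono)
        fix x assume x: "x \<in> UNIV - {z}"
        have "ln (h t x / h t z) = ln (h t x) - ln (h t z)" using hpos[OF t, of x] hpos[OF t, of z] by (simp add: ln_div)
        then have "T x = A t x z * ln (h t x / h t z) - B t x z * (h t x / h t z) + B t x z"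
          unfolding T_def by simp
        also have "\<dots> \<le> kl (A t x z) (B t x z)"
          using x hpos[OF t] by (intro kl_ineq A_off[OF t1] B_off[OF t1] AB[OF t1]) auto
        finally show "T x \<le> kl (A t x z) (B t x z)" .
      qed
      ultimately show ?thesis by linarith
    qed
    have "G' t \<le> (\<Sum>z\<in>UNIV. P t z * (\<Sum>x\<in>UNIV-{z}. kl (A t x z) (B t x z)))"
      unfolding e2 using t sub1 by (intro sum_mono mult_left_mono br P_nn) auto
    also have "\<dots> = - I t" using I_eq[OF t1] by simp
    finally show ?thesis .
  qed
  have "(G' has_integral G s - G 0) {0..s}"
    by (rule fundamental_theorem_of_calculus[OF s(1)])
       (use Gder in \<open>auto simp: has_real_derivative_iff_has_vector_derivative[symmetric]\<close>)
  moreover have "((\<lambda>t. - I t) has_integral - integral {0..s} I) {0..s}"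
    using IintS by (intro has_integral_neg integrable_integral)
  ultimately have GI: "G s - G 0 \<le> - integral {0..s} I"
    by (rule has_integral_le) (use G'le in auto)
  have Gs: "(1 - P s x1) * ln e \<le> G s"
  proof -
    have "(\<Sum>z\<in>UNIV. P s z * (ln e - (if z = x1 then ln e else 0))) \<le> G s"
      unfolding G_def hs
    proof (intro sum_mono mult_left_mono)
      fix z show "0 \<le> P s z" using s by (intro P_nn) auto
      show "ln e - (if z = x1 then ln e else 0) \<le> ln (c z + e)"
        using e unfolding c_def by auto
    qed
    moreover have "(\<Sum>z\<in>UNIV. P s z * (ln e - (if z = x1 then ln e else 0))) = (1 - P s x1) * ln e"
    proof -
      have "(\<Sum>z\<in>UNIV. P s z * (if z = x1 then ln e else 0)) = P s x1 * ln e"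
        by (simp add: if_distrib cong: if_cong)
      moreover have "(\<Sum>z\<in>UNIV. P s z * ln e) = ln e" using P_sum[of s] s by (simp add: sum_distrib_right[symmetric])
      ultimately show ?thesis unfolding right_diff_distrib sum_subtractf by (simp add: algebra_simps)
    qed
    ultimately show ?thesis by simp
  qed
  have "ln (q s x1 + e) = ln (W 0)" using Ws Ws0 by simp
  then show ?thesis using G0 GI Gs by linarith
qed

lemma final: "q 1 x1 > 0 \<and> ln (q 1 x1) \<ge> (LINT t:{0..1}|lborel. I t)"
proof -
  define J where "J = integral {0..1} I"
  have LJ: "(LINT t:{0..1}|lborel. I t) = J" unfolding J_def by (rule set_borel_integral_eq_integral(2)[OF Iint])
  have Iint_on: "I integrable_on {0..1}" using set_borel_integral_eq_integral(1)[OF Iint] .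
  have step2: "(1 - P s x1) * ln e + J \<le> ln (q s x1 + e)" if s: "0 \<le> s" "s < 1" and e: "0 < e" "e < 1" for s e
  proof -
    have Is: "I integrable_on {s..1}" by (rule integrable_on_subinterval[OF Iint_on]) (use s in auto)
    have "((\<lambda>t. if t = 1 then 0 else I t) has_integral integral {s..1} I) {s..1}"
      by (rule has_integral_spike[where S="{1}", OF negligible_sing _ integrable_integral[OF Is]]) auto
    then have "integral {s..1} I \<le> 0"
      by (rule has_integral_le[OF _ has_integral_0]) (use s I_nonpos in auto)
    moreover have "integral {0..s} I + integral {s..1} I = J"
      unfolding J_def using s Iint_on by (intro Henstock_Kurzweil_Integration.integral_combine) auto
    ultimately show ?thesis using step[OF s e] by linarith
  qed
  have q1nn: "0 \<le> q 1 x1" by (rule q_nn) simp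
  have lim: "J \<le> ln (q 1 x1 + e)" if e: "0 < e" "e < 1" for e
  proof (rule tendsto_le[of "at_left (1::real)"])
    show "at_left (1::real) \<noteq> bot" by simp
    have Pt: "((\<lambda>t. P t x1) \<longlongrightarrow> P 1 x1) (at_left 1)"
      using P_cont unfolding continuous_on_def by (metis at_within_Icc_at_left atLeastAtMost_iff zero_less_one order_refl zero_le_one)
    have qt: "((\<lambda>t. q t x1) \<longlongrightarrow> q 1 x1) (at_left 1)"
      using q_cont unfolding continuous_on_def by (metis at_within_Icc_at_left atLeastAtMost_iff zero_less_one order_refl zero_le_one)
    show "((\<lambda>s. (1 - P s x1) * ln e + J) \<longlongrightarrow> J) (at_left 1)"
      using tendsto_add[OF tendsto_mult[OF tendsto_diff[OF tendsto_const[of 1] Pt] tendsto_const[of "ln e"]] tendsto_const[of J]]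
      by (simp add: P1)
    show "((\<lambda>s. ln (q s x1 + e)) \<longlongrightarrow> ln (q 1 x1 + e)) (at_left 1)"
      using q1nn e by (intro tendsto_ln tendsto_add qt tendsto_const) auto
    show "\<forall>\<^sub>F s in at_left 1. (1 - P s x1) * ln e + J \<le> ln (q s x1 + e)"
      using eventually_at_left_real[of 0 "1::real"] by (rule eventually_mono) (use step2 e in auto)
  qed
  have qJ: "exp J \<le> q 1 x1"
  proof (rule ccontr)
    assume "\<not> exp J \<le> q 1 x1"
    then have lt: "q 1 x1 < exp J" by simp
    define e where "e = min ((exp J - q 1 x1) / 2) (1/2)"
    have e: "0 < e" "e < 1" using lt unfolding e_def by auto
    have "e \<le> (exp J - q 1 x1) / 2" unfolding e_def by (rule min.cobounded1)
    then have "q 1 x1 + e < exp J" using lt by (simp add: field_simps)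
    then have "ln (q 1 x1 + e) < ln (exp J)" using q1nn e by (intro ln_less_cancel_iff[THEN iffD2]) auto
    then show False using lim[OF e] by simp
  qed
  have pos: "0 < q 1 x1" using qJ exp_gt_zero[of J] by linarith
  have "ln (exp J) \<le> ln (q 1 x1)" using qJ pos by (subst ln_le_cancel_iff) auto
  then show ?thesis using pos LJ by simp
qed

end

definition agree :: "'d \<Rightarrow> ('d \<Rightarrow> 'a) \<Rightarrow> ('d \<Rightarrow> 'a) \<Rightarrow> bool" where
  "agree i w z \<longleftrightarrow> (\<forall>j. j \<noteq> i \<longrightarrow> w j = z j)"

lemma agree_sym: "agree i w z = agree i z w" unfolding agree_def by auto

lemma agree_unique: "agree i w z \<Longrightarrow> agree k w z \<Longrightarrow> i \<noteq> k \<Longrightarrow> w = z"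
  unfolding agree_def by (metis ext)

lemma agree_neq: "agree i w z \<Longrightarrow> w \<noteq> z \<Longrightarrow> w i \<noteq> z i"
  unfolding agree_def by (metis ext)

lemma ind_prod:
  fixes w z :: "'d::finite \<Rightarrow> 'a"
  shows "(\<Prod>j\<in>UNIV - {i}. if w j = z j then 1 else (0::real)) = (if agree i w z then 1 else 0)"
proof (cases "agree i w z")
  case True
  then have "(\<Prod>j\<in>UNIV - {i}. if w j = z j then 1 else (0::real)) = (\<Prod>j\<in>UNIV - {i}. 1)"
    unfolding agree_def by (intro prod.cong) auto
  then show ?thesis using True by simp
next
  case False
  then obtain j where "j \<noteq> i" "w j \<noteq> z j" unfolding agree_def by blast
  then have "(\<Prod>j\<in>UNIV - {i}. if w j = z j then 1 else (0::real)) = 0"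
    by (intro prod_zero) auto
  then show ?thesis using False by simp
qed

lemma FV_eq:
  fixes u :: "'d::finite \<Rightarrow> real \<Rightarrow> 'a::finite \<Rightarrow> ('d \<Rightarrow> 'a) \<Rightarrow> real"
  shows "factorized_velocity u t w z = (\<Sum>i\<in>UNIV. if agree i w z then u i t (w i) z else 0)"
  unfolding factorized_velocity_def ind_prod by (intro sum.cong) auto

lemma agree_sum:
  fixes g :: "('d::finite \<Rightarrow> 'a::finite) \<Rightarrow> 'b::comm_monoid_add"
  shows "(\<Sum>w\<in>UNIV. if agree i w z then g w else 0) = (\<Sum>y\<in>UNIV. g (z(i:=y)))"
proof -
  have "(\<Sum>w\<in>UNIV. if agree i w z then g w else 0) = (\<Sum>w\<in>{w\<in>UNIV. agree i w z}. g w)"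
    by (rule sum.inter_filter[symmetric]) simp
  also have "{w\<in>UNIV. agree i w z} = range (\<lambda>y. z(i:=y))"
  proof safe
    fix w assume "agree i w z"
    then have "w = z(i := w i)" unfolding agree_def by (auto simp: fun_eq_iff)
    then show "w \<in> range (\<lambda>y. z(i:=y))" by blast
  qed (auto simp: agree_def)
  also have "(\<Sum>w\<in>range (\<lambda>y. z(i:=y)). g w) = (\<Sum>y\<in>UNIV. g (z(i:=y)))"
    by (subst sum.reindex) (auto simp: inj_on_def fun_eq_iff split: if_splits)
  finally show ?thesis .
qed


theorem mainTheorem10:
  fixes x1 :: "'d::finite \<Rightarrow> 'a::finite"
    and p :: "'a \<Rightarrow> real"
    and uc :: "'d \<Rightarrow> real \<Rightarrow> 'a \<Rightarrow> 'a \<Rightarrow> real"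
    and pc :: "'d \<Rightarrow> real \<Rightarrow> 'a \<Rightarrow> real"
    and u :: "'d \<Rightarrow> real \<Rightarrow> 'a \<Rightarrow> ('d \<Rightarrow> 'a) \<Rightarrow> real"
    and q :: "real \<Rightarrow> ('d \<Rightarrow> 'a) \<Rightarrow> real"
  assumes uc_rate: "\<And>i. rate_conditions (uc i)"
    and uc_gen: "\<And>i. generates (uc i) (pc i)"
    and pc_0: "\<And>i. pc i 0 = p"
    and pc_1: "\<And>i. pc i 1 = (\<lambda>a. if a = x1 i then 1 else 0)"
    and u_rate: "\<And>i z t. t \<in> {0..<1} \<Longrightarrow> rate_at (\<lambda>y. u i t y z) (z i)"
    and u_pos: "\<And>i z t y. t \<in> {0..<1} \<Longrightarrow> y \<noteq> z i \<Longrightarrow> uc i t y (z i) > 0 \<Longrightarrow> u i t y z > 0"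
    and q_gen: "generates (factorized_velocity u) q"
    and q_0: "q 0 = (\<lambda>x. \<Prod>i\<in>UNIV. p (x i))"
  shows "set_integrable lborel {0..1}
           (\<lambda>t. \<Sum>x\<in>UNIV. product_path pc t x *
              (\<Sum>i\<in>UNIV. u i t (x i) x - uc i t (x i) (x i)
                 + (\<Sum>y\<in>UNIV - {x i}. uc i t y (x i) * ln (u i t y x / uc i t y (x i)))))
         \<longrightarrow> q 1 x1 > 0 \<and>
             ln (q 1 x1) \<ge>
             (LINT t:{0..1}|lborel. \<Sum>x\<in>UNIV. product_path pc t x *
              (\<Sum>i\<in>UNIV. u i t (x i) x - uc i t (x i) (x i)
                 + (\<Sum>y\<in>UNIV - {x i}. uc i t y (x i) * ln (u i t y x / uc i t y (x i)))))"

proof -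
  define I where "I = (\<lambda>t. \<Sum>x\<in>UNIV. product_path pc t x *
              (\<Sum>i\<in>UNIV. u i t (x i) x - uc i t (x i) (x i)
                 + (\<Sum>y\<in>UNIV - {x i}. uc i t y (x i) * ln (u i t y x / uc i t y (x i)))))"
  define A where "A t w z = (\<Sum>i\<in>UNIV. if agree i w z then uc i t (w i) (z i) else 0)" for t w z
  define B where "B = factorized_velocity u"
  have Beq: "B t w z = (\<Sum>i\<in>UNIV. if agree i w z then u i t (w i) z else 0)" for t w z
    unfolding B_def by (rule FV_eq)
  define P where "P = product_path pc"
  have ucr: "0 \<le> uc i t y x" if "t \<in> {0..<1}" "y \<noteq> x" for i t y x
    using uc_rate[of i] that unfolding rate_conditions_def rate_at_def by auto
  have ucs: "(\<Sum>y\<in>UNIV. uc i t y x) = 0" if "t \<in> {0..<1}" for i t x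
    using uc_rate[of i] that unfolding rate_conditions_def rate_at_def by auto
  have ur: "0 \<le> u i t y z" if "t \<in> {0..<1}" "y \<noteq> z i" for i t y z
    using u_rate[OF that(1), of i z] that unfolding rate_at_def by auto
  have us: "(\<Sum>y\<in>UNIV. u i t y z) = 0" if "t \<in> {0..<1}" for i t z
    using u_rate[OF that, of i z] unfolding rate_at_def by auto
  have pcnn: "0 \<le> pc i t a" if "t \<in> {0..1}" for i t a
    using uc_gen[of i] that unfolding generates_def prob_path_def by auto
  have pcsum: "(\<Sum>a\<in>UNIV. pc i t a) = 1" if "t \<in> {0..1}" for i t
    using uc_gen[of i] that unfolding generates_def prob_path_def by auto
  have pccont: "continuous_on {0..1} (\<lambda>t. pc i t a)" for i a
    using uc_gen[of i] unfolding generates_def by auto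
  have pcder: "((\<lambda>s. pc i s a) has_real_derivative (\<Sum>b\<in>UNIV. uc i t a b * pc i t b)) (at t within {0..1})"
    if "t \<in> {0..<1}" for i t a
    using uc_gen[of i] that unfolding generates_def by auto
  have qgen: "(\<forall>y x. continuous_on {0..<1} (\<lambda>t. B t y x)) \<and> prob_path q \<and>
     (\<forall>x. continuous_on {0..1} (\<lambda>t. q t x)) \<and>
     (\<forall>t\<in>{0..<1}. \<forall>x. ((\<lambda>s. q s x) has_real_derivative (\<Sum>z\<in>UNIV. B t x z * q t z)) (at t within {0..1}))"
    using q_gen unfolding generates_def B_def .
  have sum_single: "(\<Sum>k\<in>UNIV. if Q k then f k else 0) = (if Q i then f i else (0::real))"
    if "\<And>k. k \<noteq> i \<Longrightarrow> \<not> Q k" for Q f and i :: 'd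
  proof -
    have "(\<Sum>k\<in>UNIV. if Q k then f k else 0) = (if Q i then f i else 0) + (\<Sum>k\<in>UNIV - {i}. if Q k then f k else 0)"
      by (subst sum.remove[of UNIV i]) auto
    also have "(\<Sum>k\<in>UNIV - {i}. if Q k then f k else 0) = 0" using that by (intro sum.neutral) auto
    finally show ?thesis by simp
  qed
  have "set_integrable lborel {0..1} I \<longrightarrow> q 1 x1 > 0 \<and> ln (q 1 x1) \<ge> (LINT t:{0..1}|lborel. I t)"
  proof
    assume Iint: "set_integrable lborel {0..1} I"
    interpret core_setup A B P q I x1
    proof
      show "0 \<le> A t x z" if "t \<in> {0..<1}" "x \<noteq> z" for t x z
        unfolding A_def using that by (intro sum_nonneg) (auto intro: ucr dest: agree_neq)
      show "(\<Sum>x\<in>UNIV. A t x z) = 0" if "t \<in> {0..<1}" for t z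
        unfolding A_def using that by (subst sum.swap) (simp add: agree_sum ucs)
      show "0 \<le> B t x z" if "t \<in> {0..<1}" "x \<noteq> z" for t x z
        unfolding Beq using that by (intro sum_nonneg) (auto intro: ur dest: agree_neq)
      show "(\<Sum>x\<in>UNIV. B t x z) = 0" if "t \<in> {0..<1}" for t z
        unfolding Beq using that by (subst sum.swap) (simp add: agree_sum us)
      show "0 < B t x z" if t: "t \<in> {0..<1}" and xz: "x \<noteq> z" and Ap: "0 < A t x z" for t x z
      proof -
        have "\<exists>i. 0 < (if agree i x z then uc i t (x i) (z i) else 0)"
        proof (rule ccontr)
          assume "\<nexists>i. 0 < (if agree i x z then uc i t (x i) (z i) else 0)"
          then have "A t x z \<le> 0" unfolding A_def by (intro sum_nonpos) (auto simp: not_less)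
          then show False using Ap by simp
        qed
        then obtain i where i: "0 < (if agree i x z then uc i t (x i) (z i) else 0)" by blast
        then have ag: "agree i x z" and ucp: "0 < uc i t (x i) (z i)" by (auto split: if_splits)
        have neq: "x i \<noteq> z i" using agree_neq[OF ag xz] .
        have "0 < u i t (x i) z" by (rule u_pos[where z=z and i=i, OF t neq ucp])
        also have "u i t (x i) z = (if agree i x z then u i t (x i) z else 0)" using ag by simp
        also have "\<dots> \<le> B t x z" unfolding Beq
          by (rule member_le_sum) (use t in \<open>auto intro: ur dest: agree_neq[OF _ xz]\<close>)
        finally show ?thesis .
      qed
      show "continuous_on {0..<1} (\<lambda>t. B t x z)" for x z using qgen by blast
      show "0 \<le> P t x" if "t \<in> {0..1}" for t x
        unfolding P_def product_path_def using that by (intro prod_nonneg) (auto intro: pcnn)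
      show "(\<Sum>x\<in>UNIV. P t x) = 1" if "t \<in> {0..1}" for t
      proof -
        have "(\<Prod>i\<in>UNIV. \<Sum>a\<in>UNIV. pc i t a) = (\<Sum>g\<in>PiE UNIV (\<lambda>_. UNIV). \<Prod>i\<in>UNIV. pc i t (g i))"
          by (rule prod_sum_PiE) auto
        then show ?thesis unfolding P_def product_path_def using pcsum[OF that] by simp
      qed
      show "0 \<le> q t x" if "t \<in> {0..1}" for t x using qgen that unfolding prob_path_def by blast
      show "(\<Sum>x\<in>UNIV. q t x) = 1" if "t \<in> {0..1}" for t using qgen that unfolding prob_path_def by blast
      show "((\<lambda>s. q s x) has_real_derivative (\<Sum>z\<in>UNIV. B t x z * q t z)) (at t within {0..1})"
        if "t \<in> {0..<1}" for t x using qgen that by blast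
      show "continuous_on {0..1} (\<lambda>t. q t x1)" using qgen by blast
      show "continuous_on {0..1} (\<lambda>t. P t x1)"
        unfolding P_def product_path_def by (intro continuous_on_prod pccont)
      show "P 0 = q 0" unfolding P_def product_path_def q_0 pc_0 ..
      show "P 1 x1 = 1" unfolding P_def product_path_def pc_1 by simp
      show "set_integrable lborel {0..1} I" by fact
      show "((\<lambda>s. P s x) has_real_derivative (\<Sum>z\<in>UNIV. A t x z * P t z)) (at t within {0..1})"
        if t: "t \<in> {0..<1}" for t x
      proof -
        define D where "D i = (\<Sum>b\<in>UNIV. uc i t (x i) b * pc i t b)" for i
        define R where "R i = (\<Prod>j\<in>UNIV - {i}. pc j t (x j))" for i
        have "((\<lambda>s. \<Prod>i\<in>UNIV. pc i s (x i)) has_derivative (\<lambda>y. \<Sum>i\<in>UNIV. D i * y * R i)) (at t within {0..1})"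
          unfolding R_def
          by (rule has_derivative_prod) (use pcder[OF t] in \<open>auto simp: D_def has_field_derivative_def\<close>)
        moreover have "(\<lambda>y. \<Sum>i\<in>UNIV. D i * y * R i) = (*) (\<Sum>i\<in>UNIV. D i * R i)"
          by (auto simp: fun_eq_iff sum_distrib_left sum_distrib_right mult_ac)
        ultimately have d: "((\<lambda>s. P s x) has_real_derivative (\<Sum>i\<in>UNIV. D i * R i)) (at t within {0..1})"
          unfolding has_field_derivative_def P_def product_path_def by simp
        have Pupd: "P t (x(i:=y)) = pc i t y * R i" for i y
        proof -
          have "P t (x(i:=y)) = pc i t ((x(i:=y)) i) * (\<Prod>j\<in>UNIV - {i}. pc j t ((x(i:=y)) j))"
            unfolding P_def product_path_def by (subst prod.remove[of UNIV i]) auto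
          also have "(\<Prod>j\<in>UNIV - {i}. pc j t ((x(i:=y)) j)) = R i"
            unfolding R_def by (intro prod.cong) auto
          finally show ?thesis by (simp only: fun_upd_same)
        qed
        have "(\<Sum>z\<in>UNIV. A t x z * P t z) = (\<Sum>i\<in>UNIV. \<Sum>z\<in>UNIV. if agree i z x then uc i t (x i) (z i) * P t z else 0)"
          unfolding A_def sum_distrib_right by (subst sum.swap) (auto intro!: sum.cong simp: agree_sym)
        also have "\<dots> = (\<Sum>i\<in>UNIV. \<Sum>y\<in>UNIV. uc i t (x i) y * P t (x(i:=y)))"
          by (simp add: agree_sum)
        also have "\<dots> = (\<Sum>i\<in>UNIV. D i * R i)"
          unfolding Pupd D_def by (simp add: sum_distrib_left sum_distrib_right mult_ac)
        finally show ?thesis using d by simp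
      qed
      show "I t = - (\<Sum>z\<in>UNIV. P t z * (\<Sum>x\<in>UNIV - {z}. kl (A t x z) (B t x z)))" if t: "t \<in> {0..<1}" for t
      proof -
        have kw: "kl (A t w z) (B t w z) = (\<Sum>i\<in>UNIV. if agree i w z then kl (uc i t (w i) (z i)) (u i t (w i) z) else 0)"
          if "w \<noteq> z" for w z
        proof (cases "\<exists>i. agree i w z")
          case True
          then obtain i where i: "agree i w z" by blast
          have un: "\<And>k. k \<noteq> i \<Longrightarrow> \<not> agree k w z" using agree_unique[OF i _ _] that by metis
          have e1: "A t w z = uc i t (w i) (z i)"
            using sum_single[of i "\<lambda>k. agree k w z" "\<lambda>k. uc k t (w k) (z k)"] un i unfolding A_def by simp
          have e2: "B t w z = u i t (w i) z"
            using sum_single[of i "\<lambda>k. agree k w z" "\<lambda>k. u k t (w k) z"] un i unfolding Beq by simp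
          have e3: "(\<Sum>k\<in>UNIV. if agree k w z then kl (uc k t (w k) (z k)) (u k t (w k) z) else 0) = kl (uc i t (w i) (z i)) (u i t (w i) z)"
            using sum_single[of i "\<lambda>k. agree k w z" "\<lambda>k. kl (uc k t (w k) (z k)) (u k t (w k) z)"] un i by simp
          show ?thesis unfolding e1 e2 e3 ..
        next
          case False
          then show ?thesis unfolding A_def Beq by (simp add: kl_def)
        qed
        have stepa: "(\<Sum>w\<in>UNIV - {z}. kl (A t w z) (B t w z)) = (\<Sum>i\<in>UNIV. \<Sum>y\<in>UNIV - {z i}. kl (uc i t y (z i)) (u i t y z))" for z
        proof -
          define F where "F i w = (if agree i w z then kl (uc i t (w i) (z i)) (u i t (w i) z) else 0)" for i w
          have "(\<Sum>w\<in>UNIV - {z}. kl (A t w z) (B t w z)) = (\<Sum>w\<in>UNIV - {z}. \<Sum>i\<in>UNIV. F i w)"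
            unfolding F_def by (intro sum.cong kw) auto
          also have "\<dots> = (\<Sum>i\<in>UNIV. \<Sum>w\<in>UNIV - {z}. F i w)" by (rule sum.swap)
          also have "\<dots> = (\<Sum>i\<in>UNIV. \<Sum>y\<in>UNIV - {z i}. kl (uc i t y (z i)) (u i t y z))"
          proof (intro sum.cong refl)
            fix i
            have "(\<Sum>w\<in>UNIV. F i w) = F i z + (\<Sum>w\<in>UNIV - {z}. F i w)" by (subst sum.remove[of UNIV z]) auto
            moreover have "(\<Sum>w\<in>UNIV. F i w) = (\<Sum>y\<in>UNIV. kl (uc i t y (z i)) (u i t y z))"
              unfolding F_def by (simp add: agree_sum)
            moreover have "(\<Sum>y\<in>UNIV. kl (uc i t y (z i)) (u i t y z)) = kl (uc i t (z i) (z i)) (u i t (z i) z) + (\<Sum>y\<in>UNIV - {z i}. kl (uc i t y (z i)) (u i t y z))"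
              by (subst sum.remove[of UNIV "z i"]) auto
            moreover have "F i z = kl (uc i t (z i) (z i)) (u i t (z i) z)" unfolding F_def agree_def by simp
            ultimately show "(\<Sum>w\<in>UNIV - {z}. F i w) = (\<Sum>y\<in>UNIV - {z i}. kl (uc i t y (z i)) (u i t y z))" by linarith
          qed
          finally show ?thesis .
        qed
        have stepb: "(\<Sum>y\<in>UNIV - {z i}. kl (uc i t y (z i)) (u i t y z)) =
            - (u i t (z i) z - uc i t (z i) (z i) + (\<Sum>y\<in>UNIV - {z i}. uc i t y (z i) * ln (u i t y z / uc i t y (z i))))" for i z
        proof -
          have l: "uc i t y (z i) * ln (uc i t y (z i) / u i t y z) = - (uc i t y (z i) * ln (u i t y z / uc i t y (z i)))"
            if "y \<in> UNIV - {z i}" for y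
          proof (cases "uc i t y (z i) = 0")
            case False
            then have a: "0 < uc i t y (z i)" using ucr[OF t, of y "z i" i] that by auto
            have b: "0 < u i t y z" using u_pos[where z=z and i=i, OF t _ a] that by auto
            show ?thesis using a b by (simp add: ln_div algebra_simps)
          qed simp
          have s1: "(\<Sum>y\<in>UNIV - {z i}. uc i t y (z i)) = - uc i t (z i) (z i)"
            using ucs[OF t, of i "z i"] by (subst (asm) sum.remove[of UNIV "z i"]) auto
          have s2: "(\<Sum>y\<in>UNIV - {z i}. u i t y z) = - u i t (z i) z"
            using us[OF t, of i z] by (subst (asm) sum.remove[of UNIV "z i"]) auto
          have "(\<Sum>y\<in>UNIV - {z i}. kl (uc i t y (z i)) (u i t y z)) =
              (\<Sum>y\<in>UNIV - {z i}. uc i t y (z i) * ln (uc i t y (z i) / u i t y z)) - (\<Sum>y\<in>UNIV - {z i}. uc i t y (z i)) + (\<Sum>y\<in>UNIV - {z i}. u i t y z)"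
            unfolding kl_def by (simp add: sum.distrib sum_subtractf)
          also have "(\<Sum>y\<in>UNIV - {z i}. uc i t y (z i) * ln (uc i t y (z i) / u i t y z)) = - (\<Sum>y\<in>UNIV - {z i}. uc i t y (z i) * ln (u i t y z / uc i t y (z i)))"
            using l by (simp add: sum_negf[symmetric])
          finally show ?thesis unfolding s1 s2 by simp
        qed
        show ?thesis
          unfolding I_def P_def stepa stepb
          by (simp only: sum_negf mult_minus_right minus_minus)
      qed
    qed
    show "q 1 x1 > 0 \<and> ln (q 1 x1) \<ge> (LINT t:{0..1}|lborel. I t)" by (rule final)
  qed
  then show ?thesis unfolding I_def by simp
qed

end
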